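(* The forgetful morphism $\imath:\mathcal{Q}(r,n)\to\mathcal{A}(r,n)$ is proper.
   Context: Fix $V_\infty=\mathbb{C}^r$ with basis $e_a$ and $A_re_a=e_{a+1}$, $e_{r+1}=0$. $\mathcal{Q}(r,n)$ is the fine moduli space of framed cyclic representations $(V,B_1,B_2,B_3,I,J)$ up to $GL(V)$. These have $\dim V=n$ and satisfy $[B_1,B_2]+IJ=0$, $JB_3=A_rJ$, $B_3I=IA_r$ and $[B_3,B_i]=0$ for $i=1,2$; moreover no proper nonzero $B_1,B_2,B_3$-invariant subspace contains $\mathrm{Im}\,I$. $\mathcal{A}(r,n)$ is the fine moduli space of stable ADHM data $(V,B_1,B_2,I,J)$ with $[B_1,B_2]+IJ=0$ and no proper $B_1,B_2$-invariant subspace containing $\mathrm{Im}\,I$. The map $\imath$ forgets $B_3$. *)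

theory Defs
  imports "HOL-Analysis.Analysis"
begin

text \<open>Complex linear subspaces of a coordinate space (closed under complex scalars).\<close>
definition csubspace :: "(complex^'n) set \<Rightarrow> bool" where
  "csubspace S \<longleftrightarrow> 0 \<in> S \<and> (\<forall>x\<in>S. \<forall>y\<in>S. x + y \<in> S) \<and> (\<forall>c. \<forall>x\<in>S. c *s x \<in> S)"

text \<open>The nilpotent shift A_r on V_infinity = C^r: the basis is indexed by a finite
  linearly ordered type 'r (e_1 < ... < e_r), and A_r e_a = e_(a+1), A_r e_r = 0.
  Entry (i,j) is 1 iff i is the immediate successor of j.\<close>
definition shiftA :: "complex^('r::{finite,linorder})^('r::{finite,linorder})" where
  "shiftA = (\<chi> i j. if j < i \<and> (\<forall>k. j < k \<longrightarrow> i \<le> k) then 1 else 0)"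

type_synonym ('n,'r) adhm =
  "(complex^'n^'n) \<times> (complex^'n^'n) \<times> (complex^'r^'n) \<times> (complex^'n^'r)"
type_synonym ('n,'r) cyc =
  "(complex^'n^'n) \<times> (complex^'n^'n) \<times> (complex^'n^'n) \<times> (complex^'r^'n) \<times> (complex^'n^'r)"

definition invariant_under :: "(complex^'n) set \<Rightarrow> complex^'n^'n \<Rightarrow> bool" where
  "invariant_under S B \<longleftrightarrow> (\<forall>x\<in>S. B *v x \<in> S)"

text \<open>Stable ADHM data: [B1,B2]+IJ=0 and no proper B1,B2-invariant subspace contains Im I.\<close>
definition stable_adhm :: "('n::finite,'r::finite) adhm set" where
  "stable_adhm = {(B1,B2,I,J). B1 ** B2 - B2 ** B1 + I ** J = 0 \<and>
     (\<forall>S. csubspace S \<and> invariant_under S B1 \<and> invariant_under S B2 \<and> range ((*v) I) \<subseteq> S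
          \<longrightarrow> S = UNIV)}"

text \<open>Stable framed cyclic data.\<close>
definition stable_cyc :: "('n::finite,'r::{finite,linorder}) cyc set" where
  "stable_cyc = {(B1,B2,B3,I,J). B1 ** B2 - B2 ** B1 + I ** J = 0 \<and>
     J ** B3 = shiftA ** J \<and> B3 ** I = I ** shiftA \<and>
     B3 ** B1 = B1 ** B3 \<and> B3 ** B2 = B2 ** B3 \<and>
     (\<forall>S. csubspace S \<and> invariant_under S B1 \<and> invariant_under S B2 \<and> invariant_under S B3
          \<and> range ((*v) I) \<subseteq> S \<longrightarrow> S = UNIV)}"

text \<open>GL(V)-orbit relations: g.(B,I,J) = (g B g^-1, g I, J g^-1).\<close>
definition adhm_rel :: "(('n::finite,'r::finite) adhm \<times> ('n,'r) adhm) set" where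
  "adhm_rel = {((B1,B2,I,J),(B1',B2',I',J')). (B1,B2,I,J) \<in> stable_adhm \<and> (B1',B2',I',J') \<in> stable_adhm \<and>
     (\<exists>g h :: complex^'n^'n. g ** h = mat 1 \<and> h ** g = mat 1 \<and>
        B1' = g ** B1 ** h \<and> B2' = g ** B2 ** h \<and> I' = g ** I \<and> J' = J ** h)}"

definition cyc_rel :: "(('n::finite,'r::{finite,linorder}) cyc \<times> ('n,'r) cyc) set" where
  "cyc_rel = {((B1,B2,B3,I,J),(B1',B2',B3',I',J')). (B1,B2,B3,I,J) \<in> stable_cyc \<and> (B1',B2',B3',I',J') \<in> stable_cyc \<and>
     (\<exists>g h :: complex^'n^'n. g ** h = mat 1 \<and> h ** g = mat 1 \<and>
        B1' = g ** B1 ** h \<and> B2' = g ** B2 ** h \<and> B3' = g ** B3 ** h \<and> I' = g ** I \<and> J' = J ** h)}"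

text \<open>Quotient topology on the set of equivalence classes S // R, S carrying the
  subspace topology of the ambient Euclidean topology.\<close>
definition quot_top :: "'a::topological_space set \<Rightarrow> ('a \<times> 'a) set \<Rightarrow> 'a set topology" where
  "quot_top S R = topology (\<lambda>U. U \<subseteq> S // R \<and> openin (top_of_set S) (\<Union>U))"

text \<open>Moduli spaces (as topological spaces of GL(V)-orbits, classical topology).\<close>
definition Qmod :: "('n::finite,'r::{finite,linorder}) cyc set topology" where
  "Qmod = quot_top stable_cyc cyc_rel"

definition Amod :: "('n::finite,'r::finite) adhm set topology" where
  "Amod = quot_top stable_adhm adhm_rel"

definition forget :: "('n,'r) cyc \<Rightarrow> ('n,'r) adhm" where
  "forget = (\<lambda>(B1,B2,B3,I,J). (B1,B2,I,J))"

text \<open>The forgetful morphism on orbits: the image of a GL(V)-orbit under forget.\<close>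
definition iota :: "('n,'r) cyc set \<Rightarrow> ('n,'r) adhm set" where
  "iota c = forget ` c"

end

theory Submission
  imports Defs
begin


definition cyc_eqs :: "('n::finite,'r::{finite,linorder}) cyc \<Rightarrow> bool" where
  "cyc_eqs = (\<lambda>(B1,B2,B3,I,J). B1 ** B2 - B2 ** B1 + I ** J = 0 \<and>
     J ** B3 = shiftA ** J \<and> B3 ** I = I ** shiftA \<and>
     B3 ** B1 = B1 ** B3 \<and> B3 ** B2 = B2 ** B3)"

lemma csubspace_UNIV_inter:
  assumes "\<And>T. T \<in> F \<Longrightarrow> csubspace T"
  shows "csubspace (\<Inter>F)"
  using assms unfolding csubspace_def by blast

lemma csubspace_preimage:
  assumes "csubspace S"
  shows "csubspace {x. (M::complex^'n^'n) *v x \<in> S}"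
  using assms unfolding csubspace_def
  by (simp add: matrix_vector_right_distrib vector_scalar_commute)

lemma invD: "invariant_under S B \<Longrightarrow> x \<in> S \<Longrightarrow> B *v x \<in> S"
  unfolding invariant_under_def by blast

lemma invI: "(\<And>x. x \<in> S \<Longrightarrow> B *v x \<in> S) \<Longrightarrow> invariant_under S B"
  unfolding invariant_under_def by blast

lemma stable_cyc_iff:
  "((B1,B2,B3,I,J) \<in> stable_cyc) \<longleftrightarrow> cyc_eqs (B1,B2,B3,I,J) \<and> (B1,B2,I,J) \<in> stable_adhm"
proof
  assume st: "(B1,B2,B3,I,J) \<in> stable_cyc"
  let ?F = "{T. csubspace T \<and> invariant_under T B1 \<and> invariant_under T B2 \<and> range ((*v) I) \<subseteq> T}"
  let ?S0 = "\<Inter>?F"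
  have s0: "csubspace ?S0" by (rule csubspace_UNIV_inter) auto
  have i1: "invariant_under ?S0 B1" "invariant_under ?S0 B2" "range ((*v) I) \<subseteq> ?S0"
    unfolding invariant_under_def by blast+
  have eqs: "B3 ** B1 = B1 ** B3" "B3 ** B2 = B2 ** B3" "B3 ** I = I ** shiftA"
    using st unfolding stable_cyc_def by auto
  let ?T = "{x. B3 *v x \<in> ?S0}"
  have "?T \<in> ?F"
  proof (intro CollectI conjI)
    show "csubspace ?T" using s0 by (rule csubspace_preimage)
    have c1: "B3 *v (B1 *v x) = B1 *v (B3 *v x)" "B3 *v (B2 *v x) = B2 *v (B3 *v x)" for x
      by (simp_all add: matrix_vector_mul_assoc eqs)
    show "invariant_under ?T B1"
    proof (rule invI)
      fix x assume "x \<in> ?T"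
      then have "B3 *v x \<in> ?S0" by (simp only: mem_Collect_eq)
      then have "B1 *v (B3 *v x) \<in> ?S0" by (rule invD[OF i1(1)])
      then show "B1 *v x \<in> ?T" by (simp only: mem_Collect_eq c1)
    qed
    show "invariant_under ?T B2"
    proof (rule invI)
      fix x assume "x \<in> ?T"
      then have "B3 *v x \<in> ?S0" by (simp only: mem_Collect_eq)
      then have "B2 *v (B3 *v x) \<in> ?S0" by (rule invD[OF i1(2)])
      then show "B2 *v x \<in> ?T" by (simp only: mem_Collect_eq c1)
    qed
    have c2: "B3 *v (I *v v) = I *v (shiftA *v v)" for v
      by (simp add: matrix_vector_mul_assoc eqs(3))
    show "range ((*v) I) \<subseteq> ?T"
    proof
      fix y assume "y \<in> range ((*v) I)"
      then obtain v where y: "y = I *v v" by blast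
      have "I *v (shiftA *v v) \<in> ?S0" using i1(3) by (rule subsetD) (rule rangeI)
      then show "y \<in> ?T" by (simp only: y mem_Collect_eq c2)
    qed
  qed
  then have sub: "?S0 \<subseteq> ?T" by (rule Inter_lower)
  have i3: "invariant_under ?S0 B3"
  proof (rule invI)
    fix x assume "x \<in> ?S0"
    with sub have "x \<in> ?T" by (rule subsetD)
    then show "B3 *v x \<in> ?S0" by (simp only: mem_Collect_eq)
  qed
  have stS: "\<forall>S. csubspace S \<and> invariant_under S B1 \<and> invariant_under S B2 \<and> invariant_under S B3
          \<and> range ((*v) I) \<subseteq> S \<longrightarrow> S = UNIV" using st unfolding stable_cyc_def by simp
  have U: "?S0 = UNIV" using stS s0 i1 i3 by blast
  have "(B1,B2,I,J) \<in> stable_adhm"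
    unfolding stable_adhm_def
  proof (intro CollectI, simp only: case_prod_conv, intro conjI allI impI)
    show "B1 ** B2 - B2 ** B1 + I ** J = 0" using st unfolding stable_cyc_def by auto
    fix S assume "csubspace S \<and> invariant_under S B1 \<and> invariant_under S B2 \<and> range ((*v) I) \<subseteq> S"
    then have "S \<in> ?F" by auto
    then have "?S0 \<subseteq> S" by blast
    then show "S = UNIV" using U by auto
  qed
  moreover have "cyc_eqs (B1,B2,B3,I,J)" using st unfolding stable_cyc_def cyc_eqs_def by auto
  ultimately show "cyc_eqs (B1,B2,B3,I,J) \<and> (B1,B2,I,J) \<in> stable_adhm" by blast
next
  assume "cyc_eqs (B1,B2,B3,I,J) \<and> (B1,B2,I,J) \<in> stable_adhm"
  then show "(B1,B2,B3,I,J) \<in> stable_cyc"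
    unfolding stable_cyc_def stable_adhm_def cyc_eqs_def by auto
qed

lemma B3_unique:
  assumes st: "(B1,B2,I,J) \<in> stable_adhm"
    and b: "B3 ** B1 = B1 ** B3" "B3 ** B2 = B2 ** B3" "B3 ** I = I ** shiftA"
    and c: "C3 ** B1 = B1 ** C3" "C3 ** B2 = B2 ** C3" "C3 ** I = I ** shiftA"
  shows "B3 = C3"
proof -
  let ?S = "{x. B3 *v x = C3 *v x}"
  have "csubspace ?S" unfolding csubspace_def
    by (simp add: matrix_vector_right_distrib vector_scalar_commute)
  moreover have "invariant_under ?S B1" unfolding invariant_under_def
    by (simp add: matrix_vector_mul_assoc b c) (metis matrix_vector_mul_assoc)
  moreover have "invariant_under ?S B2" unfolding invariant_under_def
    by (simp add: matrix_vector_mul_assoc b c) (metis matrix_vector_mul_assoc)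
  moreover have "range ((*v) I) \<subseteq> ?S"
    by (auto simp add: matrix_vector_mul_assoc b c)
  ultimately have "?S = UNIV" using st unfolding stable_adhm_def by auto
  then show ?thesis by (metis (mono_tags, lifting) UNIV_I matrix_eq mem_Collect_eq)
qed

lemma mm3: "(g::'a::comm_ring_1^'n^'n) ** h = mat 1 \<Longrightarrow> g ** (h ** X) = X"
  by (metis matrix_mul_assoc matrix_mul_lid)
lemma mm3': "(g::'a::comm_ring_1^'n^'n) ** h = mat 1 \<Longrightarrow> X ** g ** h = X"
  by (metis matrix_mul_assoc matrix_mul_rid)

lemma adhm_rel_sym:
  assumes "((B1,B2,I,J),(B1',B2',I',J')) \<in> adhm_rel"
  shows "((B1',B2',I',J'),(B1,B2,I,J)) \<in> adhm_rel"
proof -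
  from assms obtain g h where *: "(B1,B2,I,J) \<in> stable_adhm" "(B1',B2',I',J') \<in> stable_adhm"
      "g ** h = mat 1" "h ** g = mat 1" "B1' = g ** B1 ** h" "B2' = g ** B2 ** h"
      "I' = g ** I" "J' = J ** h"
    unfolding adhm_rel_def by auto
  have "\<exists>g h. g ** h = mat 1 \<and> h ** g = mat 1 \<and> B1 = g ** B1' ** h \<and> B2 = g ** B2' ** h \<and> I = g ** I' \<and> J = J' ** h"
    apply (rule exI[of _ h], rule exI[of _ g])
    using * by (simp add: matrix_mul_assoc mm3')
  then show ?thesis using * unfolding adhm_rel_def by blast
qed

lemma adhm_rel_trans:
  assumes "((B1,B2,I,J),(B1',B2',I',J')) \<in> adhm_rel" "((B1',B2',I',J'),(B1'',B2'',I'',J'')) \<in> adhm_rel"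
  shows "((B1,B2,I,J),(B1'',B2'',I'',J'')) \<in> adhm_rel"
proof -
  from assms obtain g h g' h' where *: "(B1,B2,I,J) \<in> stable_adhm" "(B1'',B2'',I'',J'') \<in> stable_adhm"
      "g ** h = mat 1" "h ** g = mat 1" "B1' = g ** B1 ** h" "B2' = g ** B2 ** h"
      "I' = g ** I" "J' = J ** h"
      "g' ** h' = mat 1" "h' ** g' = mat 1" "B1'' = g' ** B1' ** h'" "B2'' = g' ** B2' ** h'"
      "I'' = g' ** I'" "J'' = J' ** h'"
    unfolding adhm_rel_def by auto
  have "\<exists>g h. g ** h = mat 1 \<and> h ** g = mat 1 \<and> B1'' = g ** B1 ** h \<and> B2'' = g ** B2 ** h \<and> I'' = g ** I \<and> J'' = J ** h"
    apply (rule exI[of _ "g' ** g"], rule exI[of _ "h ** h'"])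
    using * by (simp add: matrix_mul_assoc mm3')
  then show ?thesis using * unfolding adhm_rel_def by blast
qed

lemma equiv_adhm: "equiv (stable_adhm :: ('n::finite,'r::finite) adhm set) adhm_rel"
proof (rule equivI)
  show "adhm_rel \<subseteq> stable_adhm \<times> stable_adhm" unfolding adhm_rel_def by auto
  show "refl_on stable_adhm adhm_rel"
  proof (rule refl_onI)
    fix x assume "x \<in> stable_adhm"
    then show "(x, x) \<in> adhm_rel" unfolding adhm_rel_def
      by (cases x) (auto intro!: exI[of _ "mat 1"])
  qed
  show "sym adhm_rel"
  proof (rule symI)
    fix a b assume "(a,b) \<in> adhm_rel"
    then show "(b,a) \<in> adhm_rel" by (cases a; cases b) (simp only: adhm_rel_sym)
  qed
  show "trans adhm_rel"
  proof (rule transI)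
    fix a b c assume "(a,b) \<in> adhm_rel" "(b,c) \<in> adhm_rel"
    then show "(a,c) \<in> adhm_rel" by (cases a; cases b; cases c) (simp only: adhm_rel_trans)
  qed
qed



lemma cyc_rel_sym:
  assumes "((B1,B2,B3,I,J),(B1',B2',B3',I',J')) \<in> cyc_rel"
  shows "((B1',B2',B3',I',J'),(B1,B2,B3,I,J)) \<in> cyc_rel"
proof -
  from assms obtain g h where *: "(B1,B2,B3,I,J) \<in> stable_cyc" "(B1',B2',B3',I',J') \<in> stable_cyc"
      "g ** h = mat 1" "h ** g = mat 1" "B1' = g ** B1 ** h" "B2' = g ** B2 ** h" "B3' = g ** B3 ** h"
      "I' = g ** I" "J' = J ** h"
    unfolding cyc_rel_def by auto
  have "\<exists>g h. g ** h = mat 1 \<and> h ** g = mat 1 \<and> B1 = g ** B1' ** h \<and> B2 = g ** B2' ** h \<and> B3 = g ** B3' ** h \<and> I = g ** I' \<and> J = J' ** h"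
    apply (rule exI[of _ h], rule exI[of _ g])
    using * by (simp add: matrix_mul_assoc mm3')
  then show ?thesis using * unfolding cyc_rel_def by blast
qed

lemma cyc_rel_trans:
  assumes "((B1,B2,B3,I,J),(B1',B2',B3',I',J')) \<in> cyc_rel" "((B1',B2',B3',I',J'),(B1'',B2'',B3'',I'',J'')) \<in> cyc_rel"
  shows "((B1,B2,B3,I,J),(B1'',B2'',B3'',I'',J'')) \<in> cyc_rel"
proof -
  from assms obtain g h g' h' where *: "(B1,B2,B3,I,J) \<in> stable_cyc" "(B1'',B2'',B3'',I'',J'') \<in> stable_cyc"
      "g ** h = mat 1" "h ** g = mat 1" "B1' = g ** B1 ** h" "B2' = g ** B2 ** h" "B3' = g ** B3 ** h"
      "I' = g ** I" "J' = J ** h"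
      "g' ** h' = mat 1" "h' ** g' = mat 1" "B1'' = g' ** B1' ** h'" "B2'' = g' ** B2' ** h'" "B3'' = g' ** B3' ** h'"
      "I'' = g' ** I'" "J'' = J' ** h'"
    unfolding cyc_rel_def by auto
  have "\<exists>g h. g ** h = mat 1 \<and> h ** g = mat 1 \<and> B1'' = g ** B1 ** h \<and> B2'' = g ** B2 ** h \<and> B3'' = g ** B3 ** h \<and> I'' = g ** I \<and> J'' = J ** h"
    apply (rule exI[of _ "g' ** g"], rule exI[of _ "h ** h'"])
    using * by (simp add: matrix_mul_assoc mm3')
  then show ?thesis using * unfolding cyc_rel_def by blast
qed

lemma equiv_cyc: "equiv (stable_cyc :: ('n::finite,'r::{finite,linorder}) cyc set) cyc_rel"
proof (rule equivI)
  show "cyc_rel \<subseteq> stable_cyc \<times> stable_cyc" unfolding cyc_rel_def by auto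
  show "refl_on stable_cyc cyc_rel"
  proof (rule refl_onI)
    fix x assume "x \<in> stable_cyc"
    then show "(x, x) \<in> cyc_rel" unfolding cyc_rel_def
      by (cases x) (auto intro!: exI[of _ "mat 1"])
  qed
  show "sym cyc_rel"
  proof (rule symI)
    fix a b assume "(a,b) \<in> cyc_rel"
    then show "(b,a) \<in> cyc_rel" by (cases a; cases b) (simp only: cyc_rel_sym)
  qed
  show "trans cyc_rel"
  proof (rule transI)
    fix a b c assume "(a,b) \<in> cyc_rel" "(b,c) \<in> cyc_rel"
    then show "(a,c) \<in> cyc_rel" by (cases a; cases b; cases c) (simp only: cyc_rel_trans)
  qed
qed

lemma Union_quot_Int:
  assumes "equiv S R" "U \<subseteq> S // R" "V \<subseteq> S // R"
  shows "\<Union>(U \<inter> V) = \<Union>U \<inter> \<Union>V"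
proof
  show "\<Union>(U \<inter> V) \<subseteq> \<Union>U \<inter> \<Union>V" by blast
  show "\<Union>U \<inter> \<Union>V \<subseteq> \<Union>(U \<inter> V)"
  proof
    fix x assume "x \<in> \<Union>U \<inter> \<Union>V"
    then obtain X Y where "X \<in> U" "Y \<in> V" "x \<in> X" "x \<in> Y" by blast
    moreover then have "X = Y \<or> X \<inter> Y = {}" using quotient_disj[OF assms(1)] assms(2,3) by blast
    ultimately show "x \<in> \<Union>(U \<inter> V)" by blast
  qed
qed

lemma istop_quot:
  assumes "equiv S R"
  shows "istopology (\<lambda>U. U \<subseteq> S // R \<and> openin (top_of_set S) (\<Union>U))"
proof -
  have 1: "U \<inter> V \<subseteq> S // R \<and> openin (top_of_set S) (\<Union>(U \<inter> V))"
    if "U \<subseteq> S // R \<and> openin (top_of_set S) (\<Union>U)" "V \<subseteq> S // R \<and> openin (top_of_set S) (\<Union>V)" for U V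
    using that Union_quot_Int[OF assms, of U V] by (auto intro: openin_Int)
  have 2: "\<Union>K \<subseteq> S // R \<and> openin (top_of_set S) (\<Union>(\<Union>K))"
    if "\<forall>U\<in>K. U \<subseteq> S // R \<and> openin (top_of_set S) (\<Union>U)" for K
  proof -
    have "\<Union>(\<Union>K) = \<Union>(Union ` K)" by blast
    moreover have "openin (top_of_set S) (\<Union>(Union ` K))" using that by (auto intro: openin_Union)
    ultimately show ?thesis using that by auto
  qed
  show ?thesis unfolding istopology_def using 1 2 by blast
qed

lemma openin_quot:
  assumes "equiv S R"
  shows "openin (quot_top S R) U \<longleftrightarrow> U \<subseteq> S // R \<and> openin (top_of_set S) (\<Union>U)"
  unfolding quot_top_def using topology_inverse'[OF istop_quot[OF assms]] by simp

lemma topspace_quot: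
  assumes "equiv S R"
  shows "topspace (quot_top S R) = S // R"
proof -
  have "openin (quot_top S R) (S // R)" using openin_quot[OF assms] Union_quotient[OF assms] by simp
  then have "S // R \<subseteq> topspace (quot_top S R)" by (rule openin_subset)
  moreover have "topspace (quot_top S R) \<subseteq> S // R"
    unfolding topspace_def using openin_quot[OF assms] by blast
  ultimately show ?thesis by blast
qed

lemma closedin_quot:
  assumes "equiv S R"
  shows "closedin (quot_top S R) C \<longleftrightarrow> C \<subseteq> S // R \<and> closedin (top_of_set S) (\<Union>C)"
proof -
  have diff: "\<Union>(S // R - C) = S - \<Union>C" if "C \<subseteq> S // R"
  proof
    show "\<Union>(S // R - C) \<subseteq> S - \<Union>C"
    proof
      fix x assume "x \<in> \<Union>(S // R - C)"
      then obtain X where X: "X \<in> S // R" "X \<notin> C" "x \<in> X" by blast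
      have "x \<in> S" using X Union_quotient[OF assms] by blast
      moreover have "x \<notin> \<Union>C"
      proof
        assume "x \<in> \<Union>C"
        then obtain Y where "Y \<in> C" "x \<in> Y" by blast
        then have "X = Y \<or> X \<inter> Y = {}" using quotient_disj[OF assms] X that by blast
        then show False using X \<open>Y \<in> C\<close> \<open>x \<in> Y\<close> by blast
      qed
      ultimately show "x \<in> S - \<Union>C" by blast
    qed
    show "S - \<Union>C \<subseteq> \<Union>(S // R - C)"
      using Union_quotient[OF assms] by blast
  qed
  show ?thesis
    unfolding closedin_def topspace_quot[OF assms] openin_quot[OF assms]
    using diff Union_quotient[OF assms] by (auto; blast)
qed



fun wm :: "complex^'n^'n \<Rightarrow> complex^'n^'n \<Rightarrow> bool list \<Rightarrow> complex^'n^'n" where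
  "wm B1 B2 [] = mat 1"
| "wm B1 B2 (b # w) = (if b then B2 else B1) ** wm B1 B2 w"

lemma cont_mm:
  fixes F :: "'a::topological_space \<Rightarrow> complex^'m^'n" and G :: "'a \<Rightarrow> complex^'p^'m"
  assumes "continuous_on S F" "continuous_on S G"
  shows "continuous_on S (\<lambda>x. F x ** G x)"
  unfolding matrix_matrix_mult_def
  by (intro continuous_on_vec_lambda continuous_on_sum continuous_on_mult continuous_on_component assms)

lemma cont_mv:
  fixes F :: "'a::topological_space \<Rightarrow> complex^'m^'n" and G :: "'a \<Rightarrow> complex^'m"
  assumes "continuous_on S F" "continuous_on S G"
  shows "continuous_on S (\<lambda>x. F x *v G x)"
  unfolding matrix_vector_mult_def
  by (intro continuous_on_vec_lambda continuous_on_sum continuous_on_mult continuous_on_component assms)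

lemma cont_wm:
  fixes P1 P2 :: "'a::topological_space \<Rightarrow> complex^'n^'n"
  assumes "continuous_on S P1" "continuous_on S P2"
  shows "continuous_on S (\<lambda>x. wm (P1 x) (P2 x) w)"
proof (induction w)
  case Nil
  then show ?case by (simp add: continuous_on_const)
next
  case (Cons b w)
  show ?case
  proof (cases b)
    case True
    then show ?thesis using Cons assms by (simp add: cont_mm)
  next
    case False
    then show ?thesis using Cons assms by (simp add: cont_mm)
  qed
qed

lemma cont_det:
  fixes F :: "'a::topological_space \<Rightarrow> complex^'n^'n"
  assumes "continuous_on S F"
  shows "continuous_on S (\<lambda>x. det (F x))"
  unfolding det_def
  by (intro continuous_on_sum continuous_on_mult continuous_on_const continuous_on_prod
      continuous_on_component assms)


type_synonym 'r pv = "bool list \<times> (complex^'r)"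

definition colv :: "('n::finite,'r::{finite,linorder}) adhm \<Rightarrow> 'r pv \<Rightarrow> complex^'n" where
  "colv a p = wm (fst a) (fst (snd a)) (fst p) *v (fst (snd (snd a)) *v snd p)"

definition colv' :: "('n::finite,'r::{finite,linorder}) adhm \<Rightarrow> 'r pv \<Rightarrow> complex^'n" where
  "colv' a p = wm (fst a) (fst (snd a)) (fst p) *v (fst (snd (snd a)) *v (shiftA *v snd p))"

definition Mf :: "('n::finite \<Rightarrow> 'r pv) \<Rightarrow> ('n,'r::{finite,linorder}) adhm \<Rightarrow> complex^'n^'n" where
  "Mf f a = (\<chi> r c. colv a (f c) $ r)"

definition Mf' :: "('n::finite \<Rightarrow> 'r pv) \<Rightarrow> ('n,'r::{finite,linorder}) adhm \<Rightarrow> complex^'n^'n" where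
  "Mf' f a = (\<chi> r c. colv' a (f c) $ r)"

definition sec3 :: "('n::finite \<Rightarrow> 'r pv) \<Rightarrow> ('n,'r::{finite,linorder}) adhm \<Rightarrow> complex^'n^'n" where
  "sec3 f a = (\<chi> i k. det (\<chi> r j. if j = k then Mf' f a $ i $ r else transpose (Mf f a) $ r $ j)
                  / det (transpose (Mf f a)))"

definition sec :: "('n::finite \<Rightarrow> 'r pv) \<Rightarrow> ('n,'r::{finite,linorder}) adhm \<Rightarrow> ('n,'r) cyc" where
  "sec f a = (fst a, fst (snd a), sec3 f a, fst (snd (snd a)), snd (snd (snd a)))"

lemma cont_colv: "continuous_on S (\<lambda>a. colv a p)"
  unfolding colv_def
  by (intro cont_mv cont_wm continuous_on_const continuous_intros)

lemma cont_colv': "continuous_on S (\<lambda>a. colv' a p)"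
  unfolding colv'_def
  by (intro cont_mv cont_wm continuous_on_const continuous_intros)

lemma cont_Mf: "continuous_on S (Mf f)"
  unfolding Mf_def
  by (intro continuous_on_vec_lambda continuous_on_component cont_colv)

lemma cont_Mf': "continuous_on S (Mf' f)"
  unfolding Mf'_def
  by (intro continuous_on_vec_lambda continuous_on_component cont_colv')

lemma cont_sec3: "continuous_on {a. det (Mf f a) \<noteq> 0} (sec3 f)"
  unfolding sec3_def
proof (intro continuous_on_vec_lambda continuous_on_divide)
  fix i k
  show "continuous_on {a. det (Mf f a) \<noteq> 0}
    (\<lambda>x. det (\<chi> r j. if j = k then Mf' f x $ i $ r else transpose (Mf f x) $ r $ j))"
  proof (intro cont_det continuous_on_vec_lambda)
    fix r j
    show "continuous_on {a. det (Mf f a) \<noteq> 0} (\<lambda>x. if j = k then Mf' f x $ i $ r else transpose (Mf f x) $ r $ j)"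
      by (cases "j = k") (simp_all add: transpose_def continuous_on_component cont_Mf cont_Mf')
  qed
  show "continuous_on {a. det (Mf f a) \<noteq> 0} (\<lambda>x. det (transpose (Mf f x)))"
    by (simp add: cont_det cont_Mf)
  show "\<forall>x\<in>{a. det (Mf f a) \<noteq> 0}. det (transpose (Mf f x)) \<noteq> 0" by simp
qed

lemma cont_sec: "continuous_on {a. det (Mf f a) \<noteq> 0} (sec f)"
  unfolding sec_def
  by (intro continuous_on_Pair cont_sec3 continuous_intros)

lemma wm_comm:
  assumes "B3 ** B1 = B1 ** B3" "B3 ** B2 = B2 ** B3"
  shows "B3 ** wm B1 B2 w = wm B1 B2 w ** B3"
proof (induction w)
  case Nil
  then show ?case by simp
next
  case (Cons b w)
  have "B3 ** ((if b then B2 else B1) ** wm B1 B2 w) = (B3 ** (if b then B2 else B1)) ** wm B1 B2 w"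
    by (simp add: matrix_mul_assoc)
  also have "\<dots> = ((if b then B2 else B1) ** B3) ** wm B1 B2 w" using assms by simp
  also have "\<dots> = (if b then B2 else B1) ** (B3 ** wm B1 B2 w)" by (simp add: matrix_mul_assoc)
  also have "\<dots> = (if b then B2 else B1) ** (wm B1 B2 w ** B3)" using Cons by simp
  finally show ?case by (simp add: matrix_mul_assoc)
qed

lemma sec_eq:
  assumes d: "det (Mf f (B1,B2,I,J)) \<noteq> 0"
    and b: "B3 ** B1 = B1 ** B3" "B3 ** B2 = B2 ** B3" "B3 ** I = I ** shiftA"
  shows "B3 = sec3 f (B1,B2,I,J)"
proof -
  let ?a = "(B1,B2,I,J)"
  let ?M = "Mf f ?a" and ?M' = "Mf' f ?a"
  have col: "B3 *v colv ?a p = colv' ?a p" for p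
  proof -
    have "B3 *v colv ?a p = (B3 ** wm B1 B2 (fst p)) *v (I *v snd p)"
      by (simp add: colv_def matrix_vector_mul_assoc matrix_mul_assoc)
    also have "\<dots> = wm B1 B2 (fst p) *v ((B3 ** I) *v snd p)"
      by (simp add: wm_comm[OF b(1,2)] matrix_vector_mul_assoc matrix_mul_assoc)
    also have "\<dots> = colv' ?a p"
      by (simp add: b(3) colv'_def matrix_vector_mul_assoc)
    finally show ?thesis .
  qed
  have row: "transpose ?M *v (B3 $ i) = ?M' $ i" for i
  proof -
    have "(transpose ?M *v (B3 $ i)) $ c = (B3 *v colv ?a (f c)) $ i" for c
      by (simp add: matrix_vector_mult_def transpose_def Mf_def mult.commute)
    then show ?thesis by (simp add: vec_eq_iff col Mf'_def)
  qed
  have dt: "det (transpose ?M) \<noteq> 0" using d by simp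
  show ?thesis
  proof (subst vec_eq_iff, intro allI)
    fix i
    have "B3 $ i = (\<chi> k. det (\<chi> r j. if j = k then ?M' $ i $ r else transpose ?M $ r $ j) / det (transpose ?M))"
      using cramer[OF dt] row by blast
    then show "B3 $ i = sec3 f ?a $ i" by (simp add: sec3_def)
  qed
qed


lemma colv_B1: "fst a *v colv a (w, v) = colv a (False # w, v)"
  by (simp add: colv_def matrix_vector_mul_assoc matrix_mul_assoc)

lemma colv_B2: "fst (snd a) *v colv a (w, v) = colv a (True # w, v)"
  by (simp add: colv_def matrix_vector_mul_assoc matrix_mul_assoc)

lemma colv_I: "fst (snd (snd a)) *v v = colv a ([], v)"
  by (simp add: colv_def)

lemma span_inv:
  assumes "(*v) B ` V \<subseteq> V"
  shows "invariant_under (vec.span V) B"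
proof (rule invI)
  fix x assume "x \<in> vec.span V"
  then have "B *v x \<in> (*v) B ` vec.span V" by blast
  also have "\<dots> = vec.span ((*v) B ` V)" by (rule vec.span_image[symmetric])
  also have "\<dots> \<subseteq> vec.span V" using assms by (rule vec.span_mono)
  finally show "B *v x \<in> vec.span V" .
qed

lemma exists_basis_f:
  fixes a :: "('n::finite,'r::{finite,linorder}) adhm"
  assumes st: "a \<in> stable_adhm"
  shows "\<exists>f. det (Mf f a) \<noteq> 0"
proof -
  obtain B1 B2 I J where ae: "a = (B1,B2,I,J)" by (cases a)
  let ?V = "range (colv a)"
  have cs: "csubspace (vec.span ?V)" unfolding csubspace_def
    by (simp add: vec.span_zero vec.span_add vec.span_scale)
  have i1: "invariant_under (vec.span ?V) B1"
    by (rule span_inv) (use colv_B1[of a] ae in auto)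
  have i2: "invariant_under (vec.span ?V) B2"
    by (rule span_inv) (use colv_B2[of a] ae in auto)
  have ri: "range ((*v) I) \<subseteq> vec.span ?V"
  proof
    fix y assume "y \<in> range ((*v) I)"
    then obtain v where "y = I *v v" by blast
    then have "y = colv a ([], v)" using colv_I[of a v] ae by simp
    then show "y \<in> vec.span ?V" by (simp add: vec.span_base)
  qed
  have spanU: "vec.span ?V = UNIV"
    using st cs i1 i2 ri unfolding ae stable_adhm_def by auto
  obtain B where B: "B \<subseteq> ?V" "vec.independent B" "?V \<subseteq> vec.span B"
    by (rule vec.maximal_independent_subset)
  have "UNIV \<subseteq> vec.span B"
    using vec.span_mono[OF B(3)] spanU by (simp add: vec.span_span)
  then have "card B = vec.dim (UNIV :: (complex^'n) set)"
    using vec.basis_card_eq_dim[of B UNIV] B(2) by auto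
  then have cB: "card B = CARD('n)" by (simp only: vec_dim_card)
  have fB: "finite B" using B(2) by (rule vec.finiteI_independent)
  obtain h where h: "bij_betw h (UNIV :: 'n set) B"
    using finite_same_card_bij[of "UNIV :: 'n set" B] fB cB by auto
  have "\<forall>c. \<exists>p. h c = colv a p" using h B(1) unfolding bij_betw_def by blast
  then obtain f where f: "\<And>c. h c = colv a (f c)" by metis
  have col: "column c (Mf f a) = h c" for c
    by (simp add: column_def Mf_def f vec_eq_iff)
  have "\<forall>c. (\<Sum>i\<in>UNIV. c i *s column i (Mf f a)) = 0 \<longrightarrow> (\<forall>i. c i = 0)"
  proof (intro allI impI)
    fix c :: "'n \<Rightarrow> complex" and i
    assume s0: "(\<Sum>i\<in>UNIV. c i *s column i (Mf f a)) = 0"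
    let ?u = "\<lambda>v. c (inv_into UNIV h v)"
    have inj: "inj h" using h unfolding bij_betw_def by blast
    have "(\<Sum>v\<in>B. ?u v *s v) = (\<Sum>i\<in>UNIV. ?u (h i) *s h i)"
      using sum.reindex_bij_betw[OF h, of "\<lambda>v. ?u v *s v"] by simp
    also have "\<dots> = (\<Sum>i\<in>UNIV. c i *s column i (Mf f a))"
      by (simp add: col inv_into_f_f[OF inj])
    finally have "(\<Sum>v\<in>B. ?u v *s v) = 0" using s0 by simp
    moreover have ind: "\<forall>u. (\<Sum>v\<in>B. u v *s v) = 0 \<longrightarrow> (\<forall>v\<in>B. u v = 0)"
      using B(2) unfolding vec.independent_explicit by blast
    ultimately have "\<forall>v\<in>B. ?u v = 0" using ind[THEN spec[of _ ?u]] by blast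
    moreover have "h i \<in> B" using h unfolding bij_betw_def by blast
    ultimately show "c i = 0" using inv_into_f_f[OF inj] by force
  qed
  then have "\<exists>C. C ** Mf f a = mat 1"
    by (simp only: matrix_left_invertible_independent_columns)
  then have "det (Mf f a) \<noteq> 0"
    using invertible_det_nz invertible_left_inverse by blast
  then show ?thesis by blast
qed


lemma forget_stable: "x \<in> stable_cyc \<Longrightarrow> forget x \<in> stable_adhm"
  by (cases x) (simp add: forget_def stable_cyc_iff)

lemma closed_eqs: "closed {z :: ('n::finite,'r::{finite,linorder}) cyc. cyc_eqs z}"
proof -
  have e: "cyc_eqs z \<longleftrightarrow>
      (fst z ** fst (snd z) - fst (snd z) ** fst z + fst (snd (snd (snd z))) ** snd (snd (snd (snd z))) = 0 \<and>
       snd (snd (snd (snd z))) ** fst (snd (snd z)) = shiftA ** snd (snd (snd (snd z))) \<and>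
       fst (snd (snd z)) ** fst (snd (snd (snd z))) = fst (snd (snd (snd z))) ** shiftA \<and>
       fst (snd (snd z)) ** fst z = fst z ** fst (snd (snd z)) \<and>
       fst (snd (snd z)) ** fst (snd z) = fst (snd z) ** fst (snd (snd z)))" for z :: "('n,'r) cyc"
    by (cases z) (simp add: cyc_eqs_def)
  show ?thesis unfolding e
    by (intro closed_Collect_conj closed_Collect_eq cont_mm continuous_intros)
qed

lemma KEY:
  fixes K :: "('n::finite,'r::{finite,linorder}) cyc set"
  assumes "closedin (top_of_set stable_cyc) K"
  shows "closedin (top_of_set stable_adhm) (forget ` K)"
proof -
  obtain Kc where Kc: "closed Kc" "K = stable_cyc \<inter> Kc" using assms closedin_closed by metis
  define E where "E = {z :: ('n,'r) cyc. cyc_eqs z}"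
  define Z where "Z = Kc \<inter> E"
  have cZ: "closed Z" unfolding Z_def E_def using Kc(1) closed_eqs by (rule closed_Int)
  have sub: "forget ` K \<subseteq> stable_adhm" using Kc(2) forget_stable by auto
  have "openin (top_of_set stable_adhm) (stable_adhm - forget ` K)"
  proof (subst openin_subopen, intro ballI)
    fix a assume a: "a \<in> stable_adhm - forget ` K"
    obtain f where f: "det (Mf f a) \<noteq> 0" using exists_basis_f a by blast
    define U where "U = stable_adhm \<inter> (\<lambda>b. det (Mf f b)) -` (-{0})"
    have oU: "openin (top_of_set stable_adhm) U" unfolding U_def
      by (rule continuous_openin_preimage_gen) (auto intro: cont_det cont_Mf)
    have cs: "continuous_on U (sec f)" using cont_sec by (rule continuous_on_subset) (auto simp: U_def)
    define T where "T = U \<inter> sec f -` (-Z)"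
    have oT: "openin (top_of_set U) T" unfolding T_def using cs
      by (rule continuous_openin_preimage_gen) (simp add: cZ open_Compl)
    have oT': "openin (top_of_set stable_adhm) T" using oT oU by (rule openin_trans)
    have aT: "a \<in> T"
    proof -
      have aU: "a \<in> U" using a f unfolding U_def by auto
      have "sec f a \<notin> Z"
      proof
        assume "sec f a \<in> Z"
        then have z: "sec f a \<in> Kc" "cyc_eqs (sec f a)" unfolding Z_def E_def by auto
        obtain B1 B2 I J where ae: "a = (B1,B2,I,J)" by (cases a)
        have se: "sec f a = (B1,B2,sec3 f a,I,J)" unfolding sec_def ae by simp
        have s1: "cyc_eqs (B1,B2,sec3 f a,I,J)" using z(2) se by simp
        have s2: "(B1,B2,I,J) \<in> stable_adhm" using a ae by simp
        have "sec f a \<in> stable_cyc" unfolding se using s1 s2 stable_cyc_iff by blast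
        then have "sec f a \<in> K" using z(1) Kc(2) by blast
        moreover have "forget (sec f a) = a" using se ae by (simp add: forget_def)
        ultimately show False using a by force
      qed
      then show ?thesis using aU unfolding T_def by blast
    qed
    have "T \<subseteq> stable_adhm - forget ` K"
    proof
      fix b assume bT: "b \<in> T"
      then have bU: "b \<in> stable_adhm" "det (Mf f b) \<noteq> 0" "sec f b \<notin> Z" unfolding T_def U_def by auto
      have "b \<notin> forget ` K"
      proof
        assume "b \<in> forget ` K"
        then obtain y where y: "y \<in> K" "b = forget y" by blast
        obtain B1 B2 B3 I J where ye: "y = (B1,B2,B3,I,J)" by (cases y)
        have be: "b = (B1,B2,I,J)" using y(2) ye by (simp add: forget_def)
        have ys: "y \<in> stable_cyc" "y \<in> Kc" using y(1) Kc(2) by auto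
        have ce: "cyc_eqs (B1,B2,B3,I,J)" using ys(1) ye stable_cyc_iff by blast
        have "B3 = sec3 f (B1,B2,I,J)"
          by (rule sec_eq) (use bU(2) be ce in \<open>auto simp: cyc_eqs_def\<close>)
        then have "sec f b = y" unfolding sec_def be ye by simp
        then have "sec f b \<in> Z" using ys(2) ce ye unfolding Z_def E_def by simp
        then show False using bU(3) by blast
      qed
      then show "b \<in> stable_adhm - forget ` K" using bU(1) by blast
    qed
    then show "\<exists>T. openin (top_of_set stable_adhm) T \<and> a \<in> T \<and> T \<subseteq> stable_adhm - forget ` K"
      using oT' aT by blast
  qed
  then show ?thesis unfolding closedin_def using sub by simp
qed



lemma conj_lemmas:
  fixes g h B1 B2 B3 :: "complex^'n^'n"
  assumes "g ** h = mat 1" "h ** g = mat 1"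
    and "B3 ** B1 = B1 ** B3" "B3 ** B2 = B2 ** B3" "B3 ** I = I ** shiftA" "J ** B3 = shiftA ** J"
  shows "(g ** B3 ** h) ** (g ** B1 ** h) = (g ** B1 ** h) ** (g ** B3 ** h)"
    "(g ** B3 ** h) ** (g ** B2 ** h) = (g ** B2 ** h) ** (g ** B3 ** h)"
    "(g ** B3 ** h) ** (g ** I) = (g ** I) ** shiftA"
    "(J ** h) ** (g ** B3 ** h) = shiftA ** (J ** h)"
proof -
  have e: "X ** B3 ** B1 = X ** B1 ** B3" "X ** B3 ** B2 = X ** B2 ** B3" "X ** B3 ** I = X ** I ** shiftA"
    for X
    using assms(3-5) by (metis matrix_mul_assoc)+
  show "(g ** B3 ** h) ** (g ** B1 ** h) = (g ** B1 ** h) ** (g ** B3 ** h)"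
    "(g ** B3 ** h) ** (g ** B2 ** h) = (g ** B2 ** h) ** (g ** B3 ** h)"
    "(g ** B3 ** h) ** (g ** I) = (g ** I) ** shiftA"
    "(J ** h) ** (g ** B3 ** h) = shiftA ** (J ** h)"
    using assms by (simp_all add: matrix_mul_assoc mm3' e)
qed

lemma forget_rel:
  assumes "(x, y) \<in> cyc_rel"
  shows "(forget x, forget y) \<in> adhm_rel"
proof -
  obtain B1 B2 B3 I J where x: "x = (B1,B2,B3,I,J)" by (cases x)
  obtain B1' B2' B3' I' J' where y: "y = (B1',B2',B3',I',J')" by (cases y)
  from assms obtain g h where *: "(B1,B2,B3,I,J) \<in> stable_cyc" "(B1',B2',B3',I',J') \<in> stable_cyc"
      "g ** h = mat 1" "h ** g = mat 1" "B1' = g ** B1 ** h" "B2' = g ** B2 ** h"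
      "I' = g ** I" "J' = J ** h"
    unfolding cyc_rel_def x y by auto
  have "(B1,B2,I,J) \<in> stable_adhm" "(B1',B2',I',J') \<in> stable_adhm"
    using *(1,2) stable_cyc_iff by blast+
  then show ?thesis unfolding x y forget_def adhm_rel_def using * by auto
qed

lemma lift_rel:
  assumes x: "x \<in> stable_cyc" and r: "(forget x, b) \<in> adhm_rel"
  shows "\<exists>y. (x, y) \<in> cyc_rel \<and> forget y = b"
proof -
  obtain B1 B2 B3 I J where xe: "x = (B1,B2,B3,I,J)" by (cases x)
  obtain C1 C2 I' J' where be: "b = (C1,C2,I',J')" by (cases b)
  from r obtain g h where *: "(C1,C2,I',J') \<in> stable_adhm"
      "g ** h = mat 1" "h ** g = mat 1" "C1 = g ** B1 ** h" "C2 = g ** B2 ** h"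
      "I' = g ** I" "J' = J ** h"
    unfolding adhm_rel_def xe be forget_def by auto
  have eq: "cyc_eqs (B1,B2,B3,I,J)" using x xe stable_cyc_iff by blast
  then have eqs: "B3 ** B1 = B1 ** B3" "B3 ** B2 = B2 ** B3" "B3 ** I = I ** shiftA" "J ** B3 = shiftA ** J"
    unfolding cyc_eqs_def by auto
  have cm: "C1 ** C2 - C2 ** C1 + I' ** J' = 0" using *(1) unfolding stable_adhm_def by auto
  let ?y = "(C1,C2,g ** B3 ** h,I',J')"
  have "cyc_eqs ?y" unfolding cyc_eqs_def
    using cm conj_lemmas[OF *(2,3) eqs] *(4-7) by simp
  then have ys: "?y \<in> stable_cyc" using stable_cyc_iff *(1) by blast
  have "(x, ?y) \<in> cyc_rel" unfolding xe cyc_rel_def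
    using x xe ys *(2-7) by blast
  then show ?thesis unfolding be forget_def by auto
qed

lemma unlift_rel:
  assumes x1: "x1 \<in> stable_cyc" and x2: "x2 \<in> stable_cyc" and r: "(forget x1, forget x2) \<in> adhm_rel"
  shows "(x1, x2) \<in> cyc_rel"
proof -
  obtain y where y: "(x1, y) \<in> cyc_rel" "forget y = forget x2" using lift_rel[OF x1 r] by blast
  have ys: "y \<in> stable_cyc" using y(1) unfolding cyc_rel_def by auto
  obtain B1 B2 B3 I J where ye: "y = (B1,B2,B3,I,J)" by (cases y)
  obtain B1' B2' B3' I' J' where xe: "x2 = (B1',B2',B3',I',J')" by (cases x2)
  have same: "B1' = B1" "B2' = B2" "I' = I" "J' = J" using y(2) ye xe unfolding forget_def by auto
  have st: "(B1,B2,I,J) \<in> stable_adhm" using ys ye stable_cyc_iff by blast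
  have e1: "cyc_eqs (B1,B2,B3,I,J)" using ys ye stable_cyc_iff by blast
  have e2: "cyc_eqs (B1,B2,B3',I,J)" using x2 xe same stable_cyc_iff by blast
  have "B3 = B3'" using B3_unique[OF st] e1 e2 unfolding cyc_eqs_def by auto
  then have "y = x2" using ye xe same by simp
  then show ?thesis using y(1) by simp
qed

lemma iota_class:
  assumes x: "x \<in> stable_cyc"
  shows "iota (cyc_rel `` {x}) = adhm_rel `` {forget x}"
proof
  show "iota (cyc_rel `` {x}) \<subseteq> adhm_rel `` {forget x}"
    unfolding iota_def using forget_rel by blast
  show "adhm_rel `` {forget x} \<subseteq> iota (cyc_rel `` {x})"
  proof
    fix b assume "b \<in> adhm_rel `` {forget x}"
    then have "(forget x, b) \<in> adhm_rel" by simp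
    then obtain y where "(x, y) \<in> cyc_rel" "forget y = b" using lift_rel[OF x] by blast
    then show "b \<in> iota (cyc_rel `` {x})" unfolding iota_def by blast
  qed
qed

theorem lemma3p6:
  shows "proper_map (Qmod :: ('n::finite,'r::{finite,linorder}) cyc set topology)
                    (Amod :: ('n,'r) adhm set topology) iota"
proof -
  note eqc = equiv_cyc[where 'n='n and 'r='r]
  note eqa = equiv_adhm[where 'n='n and 'r='r]
  have tQ: "topspace (Qmod :: ('n,'r) cyc set topology) = stable_cyc // cyc_rel"
    unfolding Qmod_def by (rule topspace_quot[OF eqc])
  have iq: "iota c \<in> stable_adhm // adhm_rel" if cin: "c \<in> (stable_cyc :: ('n,'r) cyc set) // cyc_rel" for c
  proof -
    obtain x where x: "x \<in> stable_cyc" "c = cyc_rel `` {x}" using cin by (meson quotientE)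
    have "forget x \<in> stable_adhm" using x(1) by (rule forget_stable)
    then show ?thesis using iota_class[OF x(1)] x(2) by (simp add: quotientI)
  qed
  have cm: "closed_map (Qmod :: ('n,'r) cyc set topology) Amod iota"
    unfolding closed_map_def
  proof (intro allI impI)
    fix C :: "('n,'r) cyc set set" assume "closedin Qmod C"
    then have C: "C \<subseteq> stable_cyc // cyc_rel" "closedin (top_of_set stable_cyc) (\<Union>C)"
      unfolding Qmod_def closedin_quot[OF eqc] by auto
    have "\<Union>(iota ` C) = forget ` (\<Union>C)" unfolding iota_def by blast
    then have "closedin (top_of_set stable_adhm) (\<Union>(iota ` C))" using KEY[OF C(2)] by simp
    moreover have "iota ` C \<subseteq> stable_adhm // adhm_rel" using iq C(1) by blast
    ultimately show "closedin Amod (iota ` C)" unfolding Amod_def closedin_quot[OF eqa] by blast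
  qed
  have fib: "compactin Qmod {c \<in> topspace Qmod. iota c = y}" for y :: "('n,'r) adhm set"
  proof -
    let ?F = "{c \<in> topspace (Qmod :: ('n,'r) cyc set topology). iota c = y}"
    have uniq: "c1 = c2" if cc: "c1 \<in> ?F" "c2 \<in> ?F" for c1 c2
    proof -
      obtain x1 where x1: "x1 \<in> stable_cyc" "c1 = cyc_rel `` {x1}" using cc(1) tQ by (auto elim: quotientE)
      obtain x2 where x2: "x2 \<in> stable_cyc" "c2 = cyc_rel `` {x2}" using cc(2) tQ by (auto elim: quotientE)
      have fs: "forget x1 \<in> stable_adhm" "forget x2 \<in> stable_adhm"
        using x1(1) x2(1) by (simp_all add: forget_stable)
      have "adhm_rel `` {forget x1} = adhm_rel `` {forget x2}"
        using cc iota_class[OF x1(1)] iota_class[OF x2(1)] x1(2) x2(2) by simp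
      then have "(forget x1, forget x2) \<in> adhm_rel" using eq_equiv_class_iff[OF eqa fs] by simp
      then have "(x1, x2) \<in> cyc_rel" by (rule unlift_rel[OF x1(1) x2(1)])
      then show ?thesis using x1(2) x2(2) equiv_class_eq[OF eqc] by simp
    qed
    have "finite ?F"
    proof (cases "?F = {}")
      case False
      then obtain c where "c \<in> ?F" by blast
      then have "?F \<subseteq> {c}" using uniq by blast
      then show ?thesis using finite_subset by blast
    next
      case True
      then show ?thesis by (simp only: finite.emptyI)
    qed
    then show ?thesis by (intro finite_imp_compactin) auto
  qed
  show ?thesis unfolding proper_map_def using cm fib by blast
qed

end
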